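(* Let $d\ge 1$ and $n>d+1$ be integers, and let $P$ be a simple $d$-polytope in $\mathbb{R}^d$ with exactly $n$ facets (that is, $P$ is not a simplex). Then there exist a $d$-polytope $Q\subset\mathbb{R}^d$ with exactly $n-1$ facets and a closed halfspace $H^+\subset\mathbb{R}^d$ such that $Q\cap H^+$ is combinatorially equivalent to $P$ (i.e. $Q\cap H^+$ and $P$ have isomorphic face lattices). In words: every combinatorial type of simple $(n,d)$-polytope other than the simplex arises as the intersection of some $(n-1,d)$-polytope with a halfspace.
   Context: A $d$-polytope is a bounded intersection of finitely many closed halfspaces in $\mathbb{R}^d$ with nonempty interior; an $(n,d)$-polytope is a $d$-polytope with exactly $n$ facets (equivalently, $n$ irredundant defining inequalities). A $d$-polytope is simple if every vertex lies in exactly $d$ facets. Two polytopes are combinatorially equivalent if their face lattices (faces ordered by inclusion) are isomorphic. *)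

theory Defs
  imports "HOL-Analysis.Analysis"
begin

text \<open>A d-polytope in the Euclidean space 'a (of dimension d = DIM('a)):
  a polytope with nonempty interior.\<close>
definition full_polytope :: "'a::euclidean_space set \<Rightarrow> bool" where
  "full_polytope P \<longleftrightarrow> polytope P \<and> interior P \<noteq> {}"

definition num_facets :: "'a::euclidean_space set \<Rightarrow> nat" where
  "num_facets P = card {F. F facet_of P}"

definition simple_polytope :: "'a::euclidean_space set \<Rightarrow> bool" where
  "simple_polytope P \<longleftrightarrow>
     (\<forall>v. v extreme_point_of P \<longrightarrow> card {F. F facet_of P \<and> v \<in> F} = DIM('a))"

definition comb_equiv :: "'a::euclidean_space set \<Rightarrow> 'a set \<Rightarrow> bool" where
  "comb_equiv P Q \<longleftrightarrow>
     (\<exists>f. bij_betw f {F. F face_of P} {G. G face_of Q} \<and>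
          (\<forall>F1 F2. F1 face_of P \<longrightarrow> F2 face_of P \<longrightarrow> (F1 \<subseteq> F2 \<longleftrightarrow> f F1 \<subseteq> f F2)))"

definition closed_halfspace :: "'a::euclidean_space set \<Rightarrow> bool" where
  "closed_halfspace H \<longleftrightarrow> (\<exists>a b. a \<noteq> 0 \<and> H = {x. inner a x \<le> b})"

end

theory Submission
  imports Defs
begin

definition pg :: "'a::euclidean_space \<Rightarrow> 'a \<Rightarrow> 'a" where
  "pg c z = (1 / (1 - c \<bullet> z)) *\<^sub>R z"

lemma pg_inv:
  assumes "c \<bullet> z < 1"
  shows "pg (-c) (pg c z) = z" "(-c) \<bullet> pg c z < 1"
proof -
  have d: "1 - c \<bullet> z > 0" using assms by simp
  have e: "c \<bullet> pg c z = (c \<bullet> z) / (1 - c \<bullet> z)" by (simp add: pg_def)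
  have f: "1 - (-c) \<bullet> pg c z = 1 / (1 - c \<bullet> z)"
    using d by (simp add: e field_simps)
  show "pg (-c) (pg c z) = z"
    unfolding pg_def[of "-c" "pg c z"] f using d by (simp add: pg_def)
  have g: "(-c) \<bullet> pg c z = - (c \<bullet> z) / (1 - c \<bullet> z)" using e by simp
  show "(-c) \<bullet> pg c z < 1"
    unfolding g using d by (simp add: less_divide_eq)
qed

lemma pg_seg:
  assumes a: "c \<bullet> a < 1" and b: "c \<bullet> b < 1" and x: "x \<in> closed_segment a b"
  shows "pg c x \<in> closed_segment (pg c a) (pg c b)"
proof -
  obtain t where t: "0 \<le> t" "t \<le> 1" "x = (1 - t) *\<^sub>R a + t *\<^sub>R b"
    using x by (auto simp: in_segment)
  define \<alpha> where "\<alpha> = 1 - c \<bullet> a"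
  define \<beta> where "\<beta> = 1 - c \<bullet> b"
  have al: "\<alpha> > 0" "\<beta> > 0" using a b by (auto simp: \<alpha>_def \<beta>_def)
  define D where "D = (1 - t) * \<alpha> + t * \<beta>"
  have D: "D > 0" unfolding D_def using al t
    by (cases "t = 0") (auto intro: add_nonneg_pos add_pos_nonneg)
  have Dx: "1 - c \<bullet> x = D" unfolding D_def \<alpha>_def \<beta>_def t(3)
    by (simp add: inner_add_right algebra_simps)
  define s where "s = t * \<beta> / D"
  have s: "0 \<le> s" "s \<le> 1" unfolding s_def using D t al
    by (auto simp: field_simps D_def)
  have "pg c x = (1 - s) *\<^sub>R pg c a + s *\<^sub>R pg c b"
  proof -
    have 1: "1 - s = (1 - t) * \<alpha> / D" unfolding s_def using D by (simp add: field_simps D_def)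
    have 2: "(1 - s) * (1 / \<alpha>) = (1 - t) / D" unfolding 1 using al by simp
    have 3: "s * (1 / \<beta>) = t / D" unfolding s_def using al by simp
    have "(1 - s) *\<^sub>R pg c a + s *\<^sub>R pg c b = ((1 - s) * (1 / \<alpha>)) *\<^sub>R a + (s * (1 / \<beta>)) *\<^sub>R b"
      unfolding pg_def \<alpha>_def[symmetric] \<beta>_def[symmetric] by simp
    also have "\<dots> = ((1 - t) / D) *\<^sub>R a + (t / D) *\<^sub>R b" unfolding 2 3 ..
    also have "\<dots> = (1 / D) *\<^sub>R x" unfolding t(3)
      by (simp add: scaleR_add_right divide_inverse mult.commute)
    also have "\<dots> = pg c x" unfolding pg_def Dx ..
    finally show ?thesis by simp
  qed
  then show ?thesis using s by (auto simp: in_segment)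
qed

lemma face_transfer:
  assumes cS: "convex S" and cT: "convex T"
    and phiS: "\<And>x. x \<in> S \<Longrightarrow> \<phi> x \<in> T" and psiT: "\<And>y. y \<in> T \<Longrightarrow> \<psi> y \<in> S"
    and inv1: "\<And>x. x \<in> S \<Longrightarrow> \<psi> (\<phi> x) = x" and inv2: "\<And>y. y \<in> T \<Longrightarrow> \<phi> (\<psi> y) = y"
    and segpsi: "\<And>a b y. a \<in> T \<Longrightarrow> b \<in> T \<Longrightarrow> y \<in> closed_segment a b \<Longrightarrow>
                   \<psi> y \<in> closed_segment (\<psi> a) (\<psi> b)"
    and F: "F face_of S"
  shows "\<phi> ` F face_of T"
proof -
  have FS: "F \<subseteq> S" and cF: "convex F" using F face_of_imp_subset face_of_imp_convex by auto
  have segpsio: "\<psi> y \<in> open_segment (\<psi> a) (\<psi> b)"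
    if "a \<in> T" "b \<in> T" "y \<in> open_segment a b" for a b y
  proof -
    have yc: "y \<in> closed_segment a b" "y \<noteq> a" "y \<noteq> b" using that(3) by (auto simp: open_segment_def)
    have yT: "y \<in> T" using closed_segment_subset[OF that(1,2) cT] yc by auto
    have "\<psi> y \<noteq> \<psi> a" using inv2[OF yT] inv2[OF that(1)] yc by metis
    moreover have "\<psi> y \<noteq> \<psi> b" using inv2[OF yT] inv2[OF that(2)] yc by metis
    ultimately show ?thesis using segpsi[OF that(1,2) yc(1)] by (auto simp: open_segment_def)
  qed
  show ?thesis unfolding face_of_def
  proof (intro conjI ballI impI)
    show "\<phi> ` F \<subseteq> T" using FS phiS by auto
    show "convex (\<phi> ` F)" unfolding convex_contains_segment
    proof (intro ballI subsetI)
      fix a' b' z assume a': "a' \<in> \<phi> ` F" and b': "b' \<in> \<phi> ` F" and z: "z \<in> closed_segment a' b'"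
      obtain a b where ab: "a \<in> F" "b \<in> F" "a' = \<phi> a" "b' = \<phi> b" using a' b' by auto
      have aT: "a' \<in> T" "b' \<in> T" using ab FS phiS by auto
      have zT: "z \<in> T" using closed_segment_subset[OF aT cT] z by auto
      have "a \<in> S" "b \<in> S" using ab FS by auto
      then have "\<psi> z \<in> closed_segment a b" using segpsi[OF aT z] ab inv1 by simp
      then have "\<psi> z \<in> F" using closed_segment_subset[OF ab(1,2) cF] by auto
      then show "z \<in> \<phi> ` F" using inv2[OF zT] by (metis image_eqI)
    qed
    fix a' b' x'
    assume a': "a' \<in> T" and b': "b' \<in> T" and x': "x' \<in> \<phi> ` F" and xo: "x' \<in> open_segment a' b'"
    obtain x where x: "x \<in> F" "x' = \<phi> x" using x' by auto
    have "\<psi> x' \<in> open_segment (\<psi> a') (\<psi> b')" using segpsio[OF a' b' xo] .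
    then have "x \<in> open_segment (\<psi> a') (\<psi> b')" using x inv1 FS by auto
    then have "\<psi> a' \<in> F \<and> \<psi> b' \<in> F" using face_ofD[OF F _ psiT[OF a'] psiT[OF b'] x(1)] by blast
    then show "a' \<in> \<phi> ` F" "b' \<in> \<phi> ` F" using inv2 a' b' by (metis image_eqI)+
  qed
qed

lemma comb_equiv_transfer:
  assumes cS: "convex S" and cT: "convex T"
    and phiS: "\<And>x. x \<in> S \<Longrightarrow> \<phi> x \<in> T" and psiT: "\<And>y. y \<in> T \<Longrightarrow> \<psi> y \<in> S"
    and inv1: "\<And>x. x \<in> S \<Longrightarrow> \<psi> (\<phi> x) = x" and inv2: "\<And>y. y \<in> T \<Longrightarrow> \<phi> (\<psi> y) = y"
    and segphi: "\<And>a b y. a \<in> S \<Longrightarrow> b \<in> S \<Longrightarrow> y \<in> closed_segment a b \<Longrightarrow>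
                   \<phi> y \<in> closed_segment (\<phi> a) (\<phi> b)"
    and segpsi: "\<And>a b y. a \<in> T \<Longrightarrow> b \<in> T \<Longrightarrow> y \<in> closed_segment a b \<Longrightarrow>
                   \<psi> y \<in> closed_segment (\<psi> a) (\<psi> b)"
  shows "comb_equiv T S"
proof -
  have f1: "\<psi> ` G face_of S" if "G face_of T" for G
    by (rule face_transfer[OF cT cS psiT phiS inv2 inv1 segphi that])
  have f2: "\<phi> ` F face_of T" if "F face_of S" for F
    by (rule face_transfer[OF cS cT phiS psiT inv1 inv2 segpsi that])
  have i1: "\<phi> ` (\<psi> ` G) = G" if "G \<subseteq> T" for G
    using that inv2 by (force simp: image_image)
  have i2: "\<psi> ` (\<phi> ` F) = F" if "F \<subseteq> S" for F
    using that inv1 by (force simp: image_image)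
  show ?thesis unfolding comb_equiv_def
  proof (intro exI conjI allI impI)
    show "bij_betw ((`) \<psi>) {F. F face_of T} {G. G face_of S}"
      by (rule bij_betw_byWitness[where f'="(`) \<phi>"])
         (auto simp: f1 f2 i1 i2 face_of_imp_subset)
    fix F1 F2 assume "F1 face_of T" "F2 face_of T"
    then have "F1 \<subseteq> T" "F2 \<subseteq> T" by (auto simp: face_of_imp_subset)
    then show "F1 \<subseteq> F2 \<longleftrightarrow> \<psi> ` F1 \<subseteq> \<psi> ` F2"
      by (metis i1 image_mono)
  qed
qed

lemma interior_poly:
  fixes a :: "'i \<Rightarrow> 'a::euclidean_space"
  assumes fin: "finite I" and p: "\<forall>i\<in>I. a i \<bullet> p < b i"
  shows "p \<in> interior {x. \<forall>i\<in>I. a i \<bullet> x \<le> b i}"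
proof -
  have o: "open (\<Inter>i\<in>I. {x. a i \<bullet> x < b i})"
    using fin by (intro open_INT) (auto intro: open_halfspace_lt)
  show ?thesis
    by (rule interior_maximal[where T="\<Inter>i\<in>I. {x. a i \<bullet> x < b i}", THEN subsetD])
       (use o p in \<open>auto simp: less_imp_le\<close>)
qed

lemma facet_count:
  fixes a :: "'i \<Rightarrow> 'a::euclidean_space"
  assumes fin: "finite I" and S: "S = {x. \<forall>i\<in>I. a i \<bullet> x \<le> b i}"
   and p: "\<forall>i\<in>I. a i \<bullet> p < b i"
   and irr: "\<forall>i\<in>I. \<exists>z. a i \<bullet> z > b i \<and> (\<forall>j\<in>I-{i}. a j \<bullet> z \<le> b j)"
  shows "card {G. G facet_of S} = card I"
proof -
  have "p \<in> interior S" using interior_poly[OF fin p] S by simp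
  then have aff: "affine hull S = UNIV" using affine_hull_nonempty_interior by blast
  have anz: "a i \<noteq> 0" if "i \<in> I" for i using irr p that by force
  define hs where "hs i = {x. a i \<bullet> x \<le> b i}" for i
  have injhs: "inj_on hs I"
  proof (rule inj_onI)
    fix i j assume ij: "i \<in> I" "j \<in> I" "hs i = hs j"
    show "i = j"
    proof (rule ccontr)
      assume "i \<noteq> j"
      then obtain z where z: "a i \<bullet> z > b i" "a j \<bullet> z \<le> b j" using irr ij by blast
      have "z \<in> hs j" using z by (simp add: hs_def)
      then have "z \<in> hs i" using ij(3) by simp
      then show False using z by (simp add: hs_def)
    qed
  qed
  define Fam where "Fam = hs ` I"
  define a' where "a' h = a (inv_into I hs h)" for h
  define b' where "b' h = b (inv_into I hs h)" for h
  have ab': "a' (hs i) = a i" "b' (hs i) = b i" if "i \<in> I" for i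
    using injhs that by (auto simp: a'_def b'_def)
  have finF: "finite Fam" using fin by (simp add: Fam_def)
  have s0: "S = \<Inter>Fam" unfolding Fam_def hs_def S by auto
  have seq: "S = affine hull S \<inter> \<Inter>Fam" using s0 aff by simp
  have faceq: "a' h \<noteq> 0 \<and> h = {x. a' h \<bullet> x \<le> b' h}" if "h \<in> Fam" for h
    using that anz ab' unfolding Fam_def by (auto simp: hs_def)
  have psub: "S \<subset> affine hull S \<inter> \<Inter>F'" if sub: "F' \<subset> Fam" for F'
  proof -
    obtain h where h: "h \<in> Fam" "h \<notin> F'" using sub by blast
    then obtain i where i: "i \<in> I" "h = hs i" by (auto simp: Fam_def)
    obtain z where z: "a i \<bullet> z > b i" "\<forall>j\<in>I-{i}. a j \<bullet> z \<le> b j" using irr i by blast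
    have "z \<in> \<Inter>F'"
    proof
      fix k assume k: "k \<in> F'"
      then obtain j where j: "j \<in> I" "k = hs j" using sub by (auto simp: Fam_def)
      then have "j \<noteq> i" using k h i by auto
      then show "z \<in> k" using z j by (auto simp: hs_def)
    qed
    moreover have "z \<notin> S" using z(1) i(1) S by (auto simp: not_le)
    moreover have "S \<subseteq> \<Inter>F'" using seq that by blast
    ultimately show ?thesis unfolding aff by blast
  qed
  have fac: "{G. G facet_of S} = (\<lambda>i. S \<inter> {x. a i \<bullet> x = b i}) ` I"
  proof -
    have "G facet_of S \<longleftrightarrow> (\<exists>h. h \<in> Fam \<and> G = S \<inter> {x. a' h \<bullet> x = b' h})" for G
      by (rule facet_of_polyhedron_explicit[OF finF seq faceq psub])
    then show ?thesis unfolding Fam_def using ab' by auto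
  qed
  have inj: "inj_on (\<lambda>i. S \<inter> {x. a i \<bullet> x = b i}) I"
  proof (rule inj_onI, rule ccontr)
    fix i j assume ij: "i \<in> I" "j \<in> I" and eq: "S \<inter> {x. a i \<bullet> x = b i} = S \<inter> {x. a j \<bullet> x = b j}"
      and ne: "i \<noteq> j"
    obtain z where z: "a i \<bullet> z > b i" "\<forall>k\<in>I-{i}. a k \<bullet> z \<le> b k" using irr ij by blast
    have pi: "a i \<bullet> p < b i" using p ij by auto
    define t where "t = (b i - a i \<bullet> p) / (a i \<bullet> z - a i \<bullet> p)"
    have t: "0 < t" "t < 1" using pi z(1) by (auto simp: t_def field_simps)
    define q where "q = p + t *\<^sub>R (z - p)"
    have aq: "a k \<bullet> q = (1 - t) * (a k \<bullet> p) + t * (a k \<bullet> z)" for k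
      by (simp add: q_def inner_add_right inner_diff_right algebra_simps)
    have tt: "t * (a i \<bullet> z - a i \<bullet> p) = b i - a i \<bullet> p" unfolding t_def using pi z(1) by simp
    have "a i \<bullet> q = a i \<bullet> p + t * (a i \<bullet> z - a i \<bullet> p)" unfolding aq by (simp add: algebra_simps)
    then have qi: "a i \<bullet> q = b i" unfolding tt by simp
    have lt: "a k \<bullet> q < b k" if "k \<in> I" "k \<noteq> i" for k
    proof -
      have "a k \<bullet> p < b k" "a k \<bullet> z \<le> b k" using p z that by auto
      then have "(1 - t) * (a k \<bullet> p) < (1 - t) * b k" "t * (a k \<bullet> z) \<le> t * b k"
        using t by (auto intro: mult_strict_left_mono mult_left_mono)
      then show ?thesis unfolding aq by (simp add: algebra_simps)
    qed
    have "q \<in> S" using qi lt S by (auto simp: le_less)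
    then have "q \<in> S \<inter> {x. a j \<bullet> x = b j}" using eq qi by blast
    then show False using lt[OF ij(2)] ne by auto
  qed
  show ?thesis unfolding fac using card_image[OF inj] .
qed

lemma polyhedron_poly:
  fixes a :: "'i \<Rightarrow> 'a::euclidean_space"
  assumes "finite I"
  shows "polyhedron {x. \<forall>i\<in>I. a i \<bullet> x \<le> b i}"
proof -
  have "{x. \<forall>i\<in>I. a i \<bullet> x \<le> b i} = \<Inter>((\<lambda>i. {x. a i \<bullet> x \<le> b i}) ` I)" by auto
  then show ?thesis using assms by (auto intro: polyhedron_halfspace_le)
qed

lemma ball_bound:
  fixes c y :: "'a::euclidean_space"
  assumes e: "e > 0" and B: "ball c e \<subseteq> K" and H: "\<forall>v\<in>K. (v - c) \<bullet> y \<le> r"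
  shows "e / 2 * norm y \<le> r"
proof (cases "y = 0")
  case True
  have "c \<in> K" using B e by auto
  then show ?thesis using H True by force
next
  case False
  define v where "v = c + (e / 2 / norm y) *\<^sub>R y"
  have "dist c v = e / 2" using False e by (simp add: v_def dist_norm)
  then have "v \<in> K" using B e by auto
  then have "(v - c) \<bullet> y \<le> r" using H by auto
  moreover have "(v - c) \<bullet> y = e / 2 * norm y" using False
    by (simp add: v_def inner_commute dot_square_norm power2_eq_square)
  ultimately show ?thesis by simp
qed

lemma conv_half:
  fixes u :: "'i \<Rightarrow> 'a::euclidean_space"
  assumes "\<forall>i\<in>J. (u i - c) \<bullet> y \<le> r"
  shows "\<forall>v\<in>convex hull (u ` J). (v - c) \<bullet> y \<le> r"
proof -
  have eq: "{v. (v - c) \<bullet> y \<le> r} = {v. y \<bullet> v \<le> r + c \<bullet> y}"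
    by (auto simp: inner_diff_left inner_diff_right inner_commute algebra_simps)
  have "convex hull (u ` J) \<subseteq> {v. (v - c) \<bullet> y \<le> r}"
  proof (rule hull_minimal)
    show "u ` J \<subseteq> {v. (v - c) \<bullet> y \<le> r}" using assms by auto
    show "convex {v. (v - c) \<bullet> y \<le> r}" unfolding eq by (rule convex_halfspace_le)
  qed
  then show ?thesis by auto
qed

lemma G1:
  fixes c z v :: "'a::euclidean_space"
  assumes "c \<bullet> z < 1"
  shows "(v - c) \<bullet> pg c z \<le> 1 \<longleftrightarrow> v \<bullet> z \<le> 1"
    and "(v - c) \<bullet> pg c z > 1 \<longleftrightarrow> v \<bullet> z > 1"
proof -
  have d: "1 - c \<bullet> z > 0" using assms by simp
  have e: "(v - c) \<bullet> pg c z = (v \<bullet> z - c \<bullet> z) / (1 - c \<bullet> z)"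
    by (simp add: pg_def inner_diff_left)
  show "(v - c) \<bullet> pg c z \<le> 1 \<longleftrightarrow> v \<bullet> z \<le> 1" unfolding e using d by (simp add: divide_le_eq)
  show "(v - c) \<bullet> pg c z > 1 \<longleftrightarrow> v \<bullet> z > 1" unfolding e using d by (simp add: less_divide_eq)
qed

lemma seg_shift:
  fixes a b x q :: "'a::real_vector"
  assumes "x \<in> closed_segment a b"
  shows "x + q \<in> closed_segment (a + q) (b + q)" "x - q \<in> closed_segment (a - q) (b - q)"
proof -
  obtain t where t: "0 \<le> t" "t \<le> 1" "x = (1 - t) *\<^sub>R a + t *\<^sub>R b"
    using assms by (auto simp: in_segment)
  have "x + q = (1 - t) *\<^sub>R (a + q) + t *\<^sub>R (b + q)" unfolding t(3) by (simp add: algebra_simps)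
  then show "x + q \<in> closed_segment (a + q) (b + q)" using t by (auto simp: in_segment)
  have "x - q = (1 - t) *\<^sub>R (a - q) + t *\<^sub>R (b - q)" unfolding t(3) by (simp add: algebra_simps)
  then show "x - q \<in> closed_segment (a - q) (b - q)" using t by (auto simp: in_segment)
qed

lemma unbounded_ray:
  fixes y :: "'a::euclidean_space"
  assumes "bounded S" "y \<noteq> 0" "\<And>t. t \<ge> 0 \<Longrightarrow> t *\<^sub>R y \<in> S"
  shows False
proof -
  obtain B where B: "\<forall>x\<in>S. norm x \<le> B" using assms(1) bounded_iff by blast
  define t where "t = (\<bar>B\<bar> + 1) / norm y"
  have "t \<ge> 0" using assms(2) by (simp add: t_def)
  then have "norm (t *\<^sub>R y) \<le> B" using B assms(3) by blast
  moreover have "norm (t *\<^sub>R y) = \<bar>B\<bar> + 1" using assms(2) by (simp add: t_def)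
  ultimately show False by linarith
qed

lemma choose_c:
  fixes u :: "'i \<Rightarrow> 'a::euclidean_space"
  assumes fin: "finite I" and bnd: "bounded {y. \<forall>i\<in>I. u i \<bullet> y \<le> 1}"
    and card: "card I \<ge> DIM('a) + 2"
  obtains F c e where "F \<in> I" "e > 0" "ball c e \<subseteq> convex hull (u ` (I - {F}))"
proof -
  have ad: "aff_dim (u ` I) = DIM('a)"
  proof (rule ccontr)
    assume "aff_dim (u ` I) \<noteq> DIM('a)"
    then have "aff_dim (u ` I) < DIM('a)" using aff_dim_le_DIM[of "u ` I"] by linarith
    then obtain w k where w: "w \<noteq> 0" "u ` I \<subseteq> {x. w \<bullet> x = k}" by (rule aff_lowdim_subset_hyperplane)
    define s where "s = (if k \<le> 0 then w else - w)"
    have "s \<noteq> 0" using w by (simp add: s_def)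
    moreover have "t *\<^sub>R s \<in> {y. \<forall>i\<in>I. u i \<bullet> y \<le> 1}" if "t \<ge> 0" for t
    proof -
      have "u i \<bullet> (t *\<^sub>R s) \<le> 1" if "i \<in> I" for i
      proof -
        have "u i \<bullet> w = k" using w that by (auto simp: inner_commute)
        then have "u i \<bullet> s = - \<bar>k\<bar>" by (auto simp: s_def)
        moreover have "t * \<bar>k\<bar> \<ge> 0" using \<open>t \<ge> 0\<close> by simp
        ultimately show ?thesis by simp
      qed
      then show ?thesis by auto
    qed
    ultimately show False using unbounded_ray[OF bnd] by blast
  qed
  obtain B where B: "B \<subseteq> u ` I" "\<not> affine_dependent B" "affine hull (u ` I) = affine hull B"
    using affine_basis_exists by blast
  have "aff_dim B = DIM('a)" using ad B(3) by (metis aff_dim_affine_hull)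
  then have cB: "card B = Suc DIM('a)" using aff_dim_affine_independent[OF B(2)] by linarith
  then have intB: "interior (convex hull B) \<noteq> {}" using interior_convex_hull_eq_empty[OF cB] B(2) by blast
  obtain J where J: "J \<subseteq> I" "inj_on u J" "B = u ` J" using B(1) subset_image_inj by metis
  have cJ: "card J = Suc DIM('a)" using cB J card_image by metis
  have "\<not> I \<subseteq> J" using cJ card J by auto
  then obtain F where F: "F \<in> I" "F \<notin> J" by blast
  obtain c where c: "c \<in> interior (convex hull B)" using intB by blast
  then obtain e where e: "e > 0" "ball c e \<subseteq> interior (convex hull B)"
    using open_contains_ball open_interior by blast
  have "convex hull B \<subseteq> convex hull (u ` (I - {F}))"
    using J F by (intro hull_mono) auto
  then have "ball c e \<subseteq> convex hull (u ` (I - {F}))" using e interior_subset by blast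
  then show ?thesis using that F e by blast
qed

theorem mainTheorem1:
  fixes P :: "'a::euclidean_space set" and n :: nat
  assumes "full_polytope P" and "simple_polytope P"
    and "num_facets P = n" and "n > DIM('a) + 1"
  shows "\<exists>Q H. full_polytope Q \<and> num_facets Q = n - 1 \<and> closed_halfspace H \<and>
               comb_equiv (Q \<inter> H) P"
proof -
  have polyP: "polytope P" and intP: "interior P \<noteq> {}" using assms(1) by (auto simp: full_polytope_def)
  obtain p where p: "p \<in> interior P" using intP by blast
  have affP: "affine hull P = UNIV" using intP affine_hull_nonempty_interior by blast
  obtain Fam where finF: "finite Fam" and seq: "P = affine hull P \<inter> \<Inter>Fam"
    and faces: "\<forall>h \<in> Fam. \<exists>a b. a \<noteq> 0 \<and> h = {x. a \<bullet> x \<le> b}"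
    and min: "\<forall>F'. F' \<subset> Fam \<longrightarrow> P \<subset> (affine hull P) \<inter> \<Inter>F'"
    using polytope_imp_polyhedron[OF polyP] by (simp add: polyhedron_Int_affine_minimal) meson
  obtain a b where ab: "\<forall>h\<in>Fam. a h \<noteq> 0 \<and> h = {x. a h \<bullet> x \<le> b h}"
    using faces by metis
  have hmem: "x \<in> h \<longleftrightarrow> a h \<bullet> x \<le> b h" if "h \<in> Fam" for h x
  proof -
    have "h = {x. a h \<bullet> x \<le> b h}" using ab that by blast
    then show ?thesis by (metis mem_Collect_eq)
  qed
  have P0: "P = \<Inter>Fam" using seq affP by simp
  have Pdef: "P = {x. \<forall>h\<in>Fam. a h \<bullet> x \<le> b h}"
  proof -
    have "\<Inter>Fam = {x. \<forall>h\<in>Fam. a h \<bullet> x \<le> b h}" using ab by blast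
    then show ?thesis using P0 by simp
  qed
  have pin: "a h \<bullet> p < b h" if "h \<in> Fam" for h
  proof -
    have "P \<subseteq> h" using P0 that by blast
    then have "interior P \<subseteq> interior h" by (rule interior_mono)
    then have "p \<in> interior {x. a h \<bullet> x \<le> b h}" using p ab that by auto
    moreover have "a h \<noteq> 0" using ab that by blast
    ultimately show ?thesis using interior_halfspace_le by blast
  qed
  have irrP: "\<forall>h\<in>Fam. \<exists>z. a h \<bullet> z > b h \<and> (\<forall>k\<in>Fam-{h}. a k \<bullet> z \<le> b k)"
  proof
    fix h assume h: "h \<in> Fam"
    then have "Fam - {h} \<subset> Fam" by blast
    then have "P \<subset> \<Inter>(Fam - {h})" using min affP by auto
    then obtain z where z: "z \<in> \<Inter>(Fam - {h})" "z \<notin> P" by blast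
    have "z \<notin> h" using z P0 by blast
    then have "a h \<bullet> z > b h" using hmem h by (auto simp: not_le)
    moreover have "\<forall>k\<in>Fam-{h}. a k \<bullet> z \<le> b k" using z(1) hmem by blast
    ultimately show "\<exists>z. a h \<bullet> z > b h \<and> (\<forall>k\<in>Fam-{h}. a k \<bullet> z \<le> b k)" by blast
  qed
  have nF: "card Fam = n"
    using facet_count[OF finF Pdef _ irrP, of p] pin assms(3) by (simp add: num_facets_def)
  define u where "u h = (1 / (b h - a h \<bullet> p)) *\<^sub>R a h" for h
  have ukey: "u h \<bullet> (x - p) \<le> 1 \<longleftrightarrow> a h \<bullet> x \<le> b h" "u h \<bullet> (x - p) > 1 \<longleftrightarrow> a h \<bullet> x > b h"
    if "h \<in> Fam" for h x
  proof -
    have d: "b h - a h \<bullet> p > 0" using pin[OF that] by simp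
    have e: "u h \<bullet> (x - p) = (a h \<bullet> x - a h \<bullet> p) / (b h - a h \<bullet> p)"
      by (simp add: u_def inner_diff_right diff_divide_distrib)
    show "u h \<bullet> (x - p) \<le> 1 \<longleftrightarrow> a h \<bullet> x \<le> b h" unfolding e using d by (simp add: divide_le_eq)
    show "u h \<bullet> (x - p) > 1 \<longleftrightarrow> a h \<bullet> x > b h" unfolding e using d by (simp add: less_divide_eq)
  qed
  define P0 where "P0 = {y. \<forall>h\<in>Fam. u h \<bullet> y \<le> 1}"
  have P0P: "x \<in> P \<longleftrightarrow> x - p \<in> P0" for x
    using ukey by (auto simp: P0_def Pdef)
  have P0P': "y \<in> P0 \<longleftrightarrow> y + p \<in> P" for y using P0P[of "y + p"] by simp
  have bndP0: "bounded P0"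
  proof -
    obtain B where B: "\<forall>x\<in>P. norm x \<le> B" using polytope_imp_bounded[OF polyP] bounded_iff by blast
    have "norm y \<le> B + norm p" if "y \<in> P0" for y
    proof -
      have "norm (y + p) \<le> B" using B that P0P' by blast
      then show ?thesis using norm_triangle_ineq4[of "y + p" p] by simp
    qed
    then show ?thesis unfolding bounded_iff by blast
  qed
  have irr0: "\<forall>h\<in>Fam. \<exists>z. u h \<bullet> z > 1 \<and> (\<forall>k\<in>Fam-{h}. u k \<bullet> z \<le> 1)"
  proof
    fix h assume h: "h \<in> Fam"
    obtain z where z: "a h \<bullet> z > b h" "\<forall>k\<in>Fam-{h}. a k \<bullet> z \<le> b k" using irrP h by blast
    have "u h \<bullet> (z - p) > 1" using ukey h z by blast
    moreover have "\<forall>k\<in>Fam-{h}. u k \<bullet> (z - p) \<le> 1" using ukey z by blast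
    ultimately show "\<exists>z. u h \<bullet> z > 1 \<and> (\<forall>k\<in>Fam-{h}. u k \<bullet> z \<le> 1)" by blast
  qed
  obtain F c e where F: "F \<in> Fam" and e: "e > 0" and ball: "ball c e \<subseteq> convex hull (u ` (Fam - {F}))"
  proof -
    have "card Fam \<ge> DIM('a) + 2" using nF assms(4) by linarith
    from choose_c[OF finF bndP0[unfolded P0_def] this] that show ?thesis by blast
  qed
  have cz: "c \<bullet> z < 1" if "z \<in> P0" for z
  proof -
    have "\<forall>h\<in>Fam-{F}. (u h - c) \<bullet> z \<le> 1 - c \<bullet> z" using that by (auto simp: P0_def inner_diff_left)
    then have "e / 2 * norm z \<le> 1 - c \<bullet> z" by (rule ball_bound[OF e ball conv_half])
    show ?thesis
    proof (cases "z = 0")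
      case False
      then have "e / 2 * norm z > 0" using e by simp
      then show ?thesis using \<open>e / 2 * norm z \<le> 1 - c \<bullet> z\<close> by linarith
    qed simp
  qed
  define w where "w h = u h - c" for h
  define Q where "Q = {y. \<forall>h\<in>Fam-{F}. w h \<bullet> y \<le> 1}"
  define H where "H = {y. w F \<bullet> y \<le> 1}"
  have QH: "Q \<inter> H = {y. \<forall>h\<in>Fam. w h \<bullet> y \<le> 1}" using F by (auto simp: Q_def H_def)
  have bndQ: "bounded Q"
  proof -
    have "norm y \<le> 2 / e" if "y \<in> Q" for y
    proof -
      have "\<forall>h\<in>Fam-{F}. (u h - c) \<bullet> y \<le> 1" using that by (auto simp: Q_def w_def)
      then have "e / 2 * norm y \<le> 1" by (rule ball_bound[OF e ball conv_half])
      then show ?thesis using e by (simp add: field_simps)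
    qed
    then show ?thesis unfolding bounded_iff by blast
  qed
  have wF: "w F \<noteq> 0"
  proof
    assume "w F = 0"
    then have uc: "u F = c" by (simp add: w_def)
    obtain z where z: "u F \<bullet> z > 1" "\<forall>k\<in>Fam-{F}. u k \<bullet> z \<le> 1" using irr0 F by blast
    have "\<forall>k\<in>Fam-{F}. (u k - 0) \<bullet> z \<le> 1" using z by simp
    then have "\<forall>v\<in>convex hull (u ` (Fam - {F})). (v - 0) \<bullet> z \<le> 1" by (rule conv_half)
    moreover have "c \<in> convex hull (u ` (Fam - {F}))" using ball e by auto
    ultimately show False using z uc by fastforce
  qed
  have negc: "(-c) \<bullet> y < 1" if "y \<in> Q \<inter> H" for y
  proof (rule ccontr)
    assume "\<not> (-c) \<bullet> y < 1"
    then have le: "1 + c \<bullet> y \<le> 0" by simp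
    have all: "u h \<bullet> y \<le> 0" if "h \<in> Fam" for h
    proof -
      have "w h \<bullet> y \<le> 1" using \<open>y \<in> Q \<inter> H\<close> that QH by auto
      then show ?thesis using le by (simp add: w_def inner_diff_left)
    qed
    have "y \<noteq> 0" using le by auto
    moreover have "t *\<^sub>R y \<in> P0" if "t \<ge> 0" for t
      using all that by (auto simp: P0_def mult_nonneg_nonpos intro: order_trans[OF _ zero_le_one])
    ultimately show False using unbounded_ray[OF bndP0] by blast
  qed
  have irrQ: "\<forall>h\<in>Fam-{F}. \<exists>y. w h \<bullet> y > 1 \<and> (\<forall>k\<in>Fam-{F}-{h}. w k \<bullet> y \<le> 1)"
  proof
    fix h assume h: "h \<in> Fam - {F}"
    obtain z where z: "u h \<bullet> z > 1" "\<forall>k\<in>Fam-{h}. u k \<bullet> z \<le> 1" using irr0 h by blast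
    define \<alpha> where "\<alpha> = u h \<bullet> z"
    define \<gamma> where "\<gamma> = c \<bullet> z"
    have \<alpha>1: "\<alpha> > 1" using z by (simp add: \<alpha>_def)
    have scal: "s *\<^sub>R z \<in> P0" if "0 < s" "s * \<alpha> \<le> 1" "s \<le> 1" for s
    proof -
      have "u k \<bullet> (s *\<^sub>R z) \<le> 1" if "k \<in> Fam" for k
      proof (cases "k = h")
        case True then show ?thesis using \<open>s * \<alpha> \<le> 1\<close> by (simp add: \<alpha>_def)
      next
        case False
        then have "u k \<bullet> z \<le> 1" using z that by auto
        then have "s * (u k \<bullet> z) \<le> s * 1" using \<open>0 < s\<close> by (intro mult_left_mono) auto
        then show ?thesis using \<open>s \<le> 1\<close> by simp
      qed
      then show ?thesis by (auto simp: P0_def)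
    qed
    have "(1 / \<alpha>) *\<^sub>R z \<in> P0" by (rule scal) (use \<alpha>1 in auto)
    then have "c \<bullet> ((1 / \<alpha>) *\<^sub>R z) < 1" by (rule cz)
    then have "\<gamma> / \<alpha> < 1" by (simp add: \<gamma>_def)
    then have ga: "\<gamma> < \<alpha>" using \<alpha>1 by (simp add: divide_less_eq)
    define s where "s = (if \<gamma> < 1 then 1 else 2 / (\<alpha> + \<gamma>))"
    have s: "0 < s" "s \<le> 1" "s * \<alpha> > 1" "s * \<gamma> < 1"
      using \<alpha>1 ga by (auto simp: s_def field_simps)
    define z' where "z' = s *\<^sub>R z"
    have cz': "c \<bullet> z' < 1" using s by (simp add: z'_def \<gamma>_def[symmetric])
    have "w h \<bullet> pg c z' > 1" unfolding w_def G1(2)[OF cz'] using s by (simp add: z'_def \<alpha>_def[symmetric])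
    moreover have "w k \<bullet> pg c z' \<le> 1" if "k \<in> Fam-{F}-{h}" for k
    proof -
      have "u k \<bullet> z \<le> 1" using z that by auto
      then have "s * (u k \<bullet> z) \<le> s" using mult_left_mono[of "u k \<bullet> z" 1 s] s by simp
      moreover have "u k \<bullet> z' = s * (u k \<bullet> z)" by (simp add: z'_def)
      ultimately have "u k \<bullet> z' \<le> 1" using s by linarith
      then show ?thesis unfolding w_def G1(1)[OF cz'] .
    qed
    ultimately show "\<exists>y. w h \<bullet> y > 1 \<and> (\<forall>k\<in>Fam-{F}-{h}. w k \<bullet> y \<le> 1)" by blast
  qed
  have finF': "finite (Fam - {F})" using finF by simp
  have nQ: "num_facets Q = n - 1"
    using facet_count[OF finF' Q_def, of 0] irrQ nF F by (simp add: num_facets_def)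
  have polyQ: "polyhedron Q" unfolding Q_def by (rule polyhedron_poly[OF finF'])
  have fullQ: "full_polytope Q"
  proof -
    have "0 \<in> interior Q" unfolding Q_def by (rule interior_poly[OF finF']) simp
    then show ?thesis using polyQ bndQ by (auto simp: full_polytope_def polytope_eq_bounded_polyhedron)
  qed
  have hsH: "closed_halfspace H" using wF by (auto simp: closed_halfspace_def H_def)
  define \<phi> where "\<phi> x = pg c (x - p)" for x
  define \<psi> where "\<psi> y = pg (-c) y + p" for y
  have cxp: "c \<bullet> (x - p) < 1" if "x \<in> P" for x using cz P0P that by blast
  have ce: "comb_equiv (Q \<inter> H) P"
  proof (rule comb_equiv_transfer[where \<phi> = \<phi> and \<psi> = \<psi>])
    show "convex P" using polyP by (rule polytope_imp_convex)
    show "convex (Q \<inter> H)" unfolding QH by (rule polyhedron_imp_convex[OF polyhedron_poly[OF finF]])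
    show "\<phi> x \<in> Q \<inter> H" if "x \<in> P" for x
    proof -
      have "x - p \<in> P0" using P0P that by blast
      then show ?thesis unfolding QH \<phi>_def w_def using G1(1)[OF cxp[OF that]] by (auto simp: P0_def)
    qed
    show "\<psi> y \<in> P" if "y \<in> Q \<inter> H" for y
    proof -
      have n1: "(-c) \<bullet> y < 1" using negc that .
      have z1: "c \<bullet> pg (-c) y < 1" using pg_inv(2)[OF n1] by simp
      have z2: "pg c (pg (-c) y) = y" using pg_inv(1)[OF n1] by simp
      have "pg (-c) y \<in> P0" using that G1(1)[OF z1] z2 unfolding QH P0_def w_def by auto
      then show ?thesis unfolding \<psi>_def using P0P' by blast
    qed
    show "\<psi> (\<phi> x) = x" if "x \<in> P" for x using pg_inv(1)[OF cxp[OF that]] by (simp add: \<phi>_def \<psi>_def)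
    show "\<phi> (\<psi> y) = y" if "y \<in> Q \<inter> H" for y
      using pg_inv(1)[OF negc[OF that]] by (simp add: \<phi>_def \<psi>_def)
    show "\<phi> y \<in> closed_segment (\<phi> a) (\<phi> b)"
      if "a \<in> P" "b \<in> P" "y \<in> closed_segment a b" for a b y
      unfolding \<phi>_def by (rule pg_seg[OF cxp[OF that(1)] cxp[OF that(2)] seg_shift(2)[OF that(3)]])
    show "\<psi> y \<in> closed_segment (\<psi> a) (\<psi> b)"
      if "a \<in> Q \<inter> H" "b \<in> Q \<inter> H" "y \<in> closed_segment a b" for a b y
      unfolding \<psi>_def by (rule seg_shift(1)[OF pg_seg[OF negc[OF that(1)] negc[OF that(2)] that(3)]])
  qed
  show ?thesis using fullQ nQ hsH ce by blast
qed

end
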